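(* Let $\alpha\ge0$, $\beta\ge0$, $\gamma<0$, $\omega^2=1$, $ca\ge0$, $N\ge2$, and $r>0$. Let $(x_j(t),y_j(t))_{j=1}^N$ be a solution of $$\dot{x}_i=y_i+\frac{ca}{N}\sum_{j=1}^N(x_j-x_i),\qquad \dot{y}_i=-(\alpha x_i^2+\beta y_i^2-\gamma)y_i-\omega^2x_i+\frac{ca}{N}\sum_{j=1}^N(y_j-y_i),$$ with $x_j(0)^2+y_j(0)^2\le r^2$ for all $j$. Consider the associated (time-dependent) virtual system on $\mathbb{R}^2$ $$\dot x=y+\frac{ca}{N}\Big(\sum_{j=1}^N x_j(t)-Nx\Big),\qquad \dot y=-(\alpha x^2+\beta y^2-\gamma)y-\omega^2x+\frac{ca}{N}\Big(\sum_{j=1}^N y_j(t)-Ny\Big).$$ Then for every $t\ge0$ and every $(x,y)$ with $x^2+y^2=r^2$, the vector field $(\dot x,\dot y)$ of the virtual system satisfies $x\dot x+y\dot y\le0$. Consequently the closed disk $\{x^2+y^2\le r^2\}$ is a trapping (forward invariant) region for the virtual system, and in particular $x_k(t)^2+y_k(t)^2\le r^2$ for all $k$ and all $t\ge0$. *)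

theory Defs
  imports "HOL-Analysis.Analysis"
begin

definition net_x :: "real \<Rightarrow> nat \<Rightarrow> (nat \<Rightarrow> real \<Rightarrow> real) \<Rightarrow> (nat \<Rightarrow> real \<Rightarrow> real) \<Rightarrow> nat \<Rightarrow> real \<Rightarrow> real" where
  "net_x ca N xs ys i t = ys i t + ca / real N * (\<Sum>j=1..N. xs j t - xs i t)"

definition net_y :: "real \<Rightarrow> real \<Rightarrow> real \<Rightarrow> real \<Rightarrow> real \<Rightarrow> nat \<Rightarrow> (nat \<Rightarrow> real \<Rightarrow> real) \<Rightarrow> (nat \<Rightarrow> real \<Rightarrow> real) \<Rightarrow> nat \<Rightarrow> real \<Rightarrow> real" where
  "net_y \<alpha> \<beta> \<gamma> \<omega> ca N xs ys i t =
     - (\<alpha> * (xs i t)^2 + \<beta> * (ys i t)^2 - \<gamma>) * ys i t - \<omega>^2 * xs i t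
     + ca / real N * (\<Sum>j=1..N. ys j t - ys i t)"

definition virt_x :: "real \<Rightarrow> nat \<Rightarrow> (nat \<Rightarrow> real \<Rightarrow> real) \<Rightarrow> real \<Rightarrow> real \<Rightarrow> real \<Rightarrow> real" where
  "virt_x ca N xs t x y = y + ca / real N * ((\<Sum>j=1..N. xs j t) - real N * x)"

definition virt_y :: "real \<Rightarrow> real \<Rightarrow> real \<Rightarrow> real \<Rightarrow> real \<Rightarrow> nat \<Rightarrow> (nat \<Rightarrow> real \<Rightarrow> real) \<Rightarrow> real \<Rightarrow> real \<Rightarrow> real \<Rightarrow> real" where
  "virt_y \<alpha> \<beta> \<gamma> \<omega> ca N ys t x y =
     - (\<alpha> * x^2 + \<beta> * y^2 - \<gamma>) * y - \<omega>^2 * x + ca / real N * ((\<Sum>j=1..N. ys j t) - real N * y)"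

end

theory Submission
  imports Defs
begin

lemma key:
  fixes x y \<alpha> \<beta> \<gamma> \<omega> ca n :: real and X Y :: "nat \<Rightarrow> real" and J :: "nat set"
  assumes "\<alpha> \<ge> 0" "\<beta> \<ge> 0" "\<gamma> < 0" "\<omega>^2 = 1" "ca \<ge> 0" "n \<ge> 0"
    and bnd: "\<forall>j\<in>J. (X j)^2 + (Y j)^2 \<le> x^2 + y^2"
  shows "x * (y + ca / n * (\<Sum>j\<in>J. X j - x)) + y * (- (\<alpha> * x^2 + \<beta> * y^2 - \<gamma>) * y - \<omega>^2 * x + ca / n * (\<Sum>j\<in>J. Y j - y)) \<le> 0"
proof -
  have h: "x*(X j - x) + y*(Y j - y) \<le> 0" if "j \<in> J" for j
  proof -
    have "0 \<le> (x - X j)^2 + (y - Y j)^2" by simp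
    moreover have "(X j)^2 + (Y j)^2 \<le> x^2 + y^2" using bnd that by blast
    ultimately show ?thesis by (simp add: power2_eq_square algebra_simps)
  qed
  have S: "(\<Sum>j\<in>J. x*(X j - x) + y*(Y j - y)) \<le> 0" by (rule sum_nonpos) (use h in blast)
  have eq: "x * (\<Sum>j\<in>J. X j - x) + y * (\<Sum>j\<in>J. Y j - y) = (\<Sum>j\<in>J. x*(X j - x) + y*(Y j - y))"
    by (simp add: sum_distrib_left sum.distrib)
  define c where "c = ca / n"
  have c: "c \<ge> 0" using assms by (simp add: c_def)
  define A where "A = (\<Sum>j\<in>J. X j - x)"
  define B where "B = (\<Sum>j\<in>J. Y j - y)"
  have "x * (y + c * A) + y * (- (\<alpha> * x^2 + \<beta> * y^2 - \<gamma>) * y - \<omega>^2 * x + c * B)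
      = x*y*(1 - \<omega>^2) - (\<alpha>*x^2+\<beta>*y^2)*y^2 + \<gamma>*y^2 + c * (x*A + y*B)"
    by (simp add: algebra_simps power2_eq_square)
  also have "\<dots> \<le> 0"
  proof -
    have "(\<alpha>*x^2+\<beta>*y^2)*y^2 \<ge> 0" using assms by simp
    moreover have "\<gamma>*y^2 \<le> 0" using assms by (simp add: mult_nonpos_nonneg)
    moreover have "c * (x*A + y*B) \<le> 0" using c S eq unfolding A_def B_def by (simp add: mult_nonneg_nonpos)
    moreover have "x*y*(1 - \<omega>^2) = 0" using assms by simp
    ultimately show ?thesis by linarith
  qed
  finally show ?thesis unfolding c_def A_def B_def .
qed

lemma deriv_neg_left:
  fixes g :: "real \<Rightarrow> real"
  assumes "(g has_real_derivative D) (at t within {a..t})" "a < t" "D < 0"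
  shows "\<exists>s\<in>{a..<t}. g s > g t"
proof -
  from assms(1) have "((\<lambda>y. (g y - g t) / (y - t)) \<longlongrightarrow> D) (at t within {a..t})"
    by (simp add: has_field_derivative_iff)
  hence "eventually (\<lambda>y. (g y - g t)/(y-t) < 0) (at t within {a..t})"
    using assms(3) by (rule order_tendstoD)
  then obtain d where d: "d>0" "\<forall>y\<in>{a..t}. y \<noteq> t \<and> dist y t < d \<longrightarrow> (g y - g t)/(y-t) < 0"
    by (auto simp: eventually_at)
  define y where "y = max a (t - d/2)"
  have y: "y \<in> {a..t}" "y \<noteq> t" "dist y t < d" "y < t" using d assms(2) by (auto simp: y_def dist_real_def)
  hence "(g y - g t)/(y-t) < 0" using d by blast
  hence "g y - g t > 0" using y(4) by (simp add: divide_less_0_iff)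
  thus ?thesis using y by auto
qed

lemma first_cross:
  fixes g :: "'i \<Rightarrow> real \<Rightarrow> real"
  assumes fin: "finite I" and ab: "a \<le> b" and cont: "\<forall>i\<in>I. continuous_on {a..b} (g i)"
    and start: "\<forall>i\<in>I. g i a < 0"
    and crit: "\<And>t i. t \<in> {a<..b} \<Longrightarrow> i \<in> I \<Longrightarrow> g i t = 0 \<Longrightarrow> (\<forall>j\<in>I. \<forall>s\<in>{a..<t}. g j s < 0)
               \<Longrightarrow> (\<forall>j\<in>I. g j t \<le> 0) \<Longrightarrow> False"
  shows "\<forall>i\<in>I. \<forall>t\<in>{a..b}. g i t < 0"
proof (rule ccontr)
  assume "\<not> ?thesis"
  then obtain i0 t0 where i0: "i0\<in>I" "t0 \<in>{a..b}" "g i0 t0 \<ge> 0" by force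
  define S where "S = (\<Union>i\<in>I. {a..t0} \<inter> g i -` {0..})"
  have contt: "continuous_on {a..t0} (g i)" if "i \<in> I" for i
    using cont that i0(2) by (auto intro: continuous_on_subset)
  have "closed S" unfolding S_def
    by (rule closed_UN[OF fin]) (auto intro: continuous_closed_preimage contt)
  moreover have "S \<subseteq> {a..t0}" unfolding S_def by auto
  ultimately have "compact S"
    by (metis compact_Icc compact_Int_closed inf.absorb_iff2)
  moreover have "t0 \<in> S" using i0 unfolding S_def by auto
  ultimately obtain s0 where s0: "s0 \<in> S" "\<forall>s\<in>S. s0 \<le> s"
    using compact_attains_inf by blast
  then obtain i1 where i1: "i1 \<in> I" "s0 \<in> {a..t0}" "g i1 s0 \<ge> 0" unfolding S_def by auto
  have below: "\<forall>j\<in>I. \<forall>s\<in>{a..<s0}. g j s < 0"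
  proof (intro ballI)
    fix j s assume j: "j \<in> I" and s: "s \<in> {a..<s0}"
    show "g j s < 0"
    proof (rule ccontr)
      assume "\<not> g j s < 0"
      hence "s \<in> S" using j s i1(2) unfolding S_def by fastforce
      thus False using s0(2) s by force
    qed
  qed
  have "s0 > a" using i1 start by (metis atLeastAtMost_iff not_le order.not_eq_order_implies_strict)
  have le: "\<forall>j\<in>I. g j s0 \<le> 0"
  proof (intro ballI)
    fix j assume j: "j \<in> I"
    show "g j s0 \<le> 0"
    proof (rule ccontr)
      assume pos: "\<not> g j s0 \<le> 0"
      have "continuous_on {a..s0} (g j)" using contt[OF j] i1(2) by (auto intro: continuous_on_subset)
      then obtain z where z: "z \<ge> a" "z \<le> s0" "g j z = 0"
        using IVT'[of "g j" a 0 s0] start j pos \<open>s0 > a\<close> by force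
      have "z \<noteq> s0" using z pos by auto
      thus False using below j z by force
    qed
  qed
  hence "g i1 s0 = 0" using i1 by force
  show False
    by (rule crit[of s0 i1]) (use \<open>s0 > a\<close> i1 i0 below le in auto)
qed

lemma eps_le:
  fixes E R T :: real
  assumes "T \<ge> 0" "\<forall>\<epsilon>>0. E < R + \<epsilon>*(1+T)"
  shows "E \<le> R"
proof (rule ccontr)
  assume "\<not> E \<le> R"
  define \<epsilon> where "\<epsilon> = (E - R)/(2*(1+T))"
  have "\<epsilon> > 0" using assms \<open>\<not> E \<le> R\<close> by (simp add: \<epsilon>_def)
  hence "E < R + \<epsilon>*(1+T)" using assms by blast
  moreover have "\<epsilon>*(1+T) = (E - R)/2" using assms by (simp add: \<epsilon>_def field_simps)
  ultimately have "E < R + (E - R)/2" by simp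
  thus False using \<open>\<not> E \<le> R\<close> by (simp add: field_simps)
qed

theorem lemma4p6:
  fixes \<alpha> \<beta> \<gamma> \<omega> ca r :: real and N :: nat
    and xs ys :: "nat \<Rightarrow> real \<Rightarrow> real"
  assumes "\<alpha> \<ge> 0" and "\<beta> \<ge> 0" and "\<gamma> < 0" and "\<omega>^2 = 1" and "ca \<ge> 0"
    and "N \<ge> 2" and "r > 0"
    and solx: "\<And>i t. i \<in> {1..N} \<Longrightarrow> t \<ge> 0 \<Longrightarrow>
          (xs i has_real_derivative net_x ca N xs ys i t) (at t within {0..})"
    and soly: "\<And>i t. i \<in> {1..N} \<Longrightarrow> t \<ge> 0 \<Longrightarrow>
          (ys i has_real_derivative net_y \<alpha> \<beta> \<gamma> \<omega> ca N xs ys i t) (at t within {0..})"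
    and init: "\<And>j. j \<in> {1..N} \<Longrightarrow> (xs j 0)^2 + (ys j 0)^2 \<le> r^2"
  shows "(\<forall>t\<ge>0. \<forall>x y. x^2 + y^2 = r^2 \<longrightarrow>
            x * virt_x ca N xs t x y + y * virt_y \<alpha> \<beta> \<gamma> \<omega> ca N ys t x y \<le> 0)
       \<and> (\<forall>t0 t1 (u::real \<Rightarrow> real) (v::real \<Rightarrow> real). 0 \<le> t0 \<and> t0 \<le> t1
            \<and> (\<forall>t\<in>{t0..t1}. (u has_real_derivative virt_x ca N xs t (u t) (v t)) (at t within {t0..t1})
                           \<and> (v has_real_derivative virt_y \<alpha> \<beta> \<gamma> \<omega> ca N ys t (u t) (v t)) (at t within {t0..t1}))
            \<and> (u t0)^2 + (v t0)^2 \<le> r^2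
            \<longrightarrow> (\<forall>t\<in>{t0..t1}. (u t)^2 + (v t)^2 \<le> r^2))
       \<and> (\<forall>k\<in>{1..N}. \<forall>t\<ge>0. (xs k t)^2 + (ys k t)^2 \<le> r^2)"
proof -
  have sumx: "(\<Sum>j=1..N. f j) - real N * z = (\<Sum>j=1..N. f j - z)" for f :: "nat \<Rightarrow> real" and z
    by (simp add: sum_subtractf)
  have Eb: "\<forall>k\<in>{1..N}. \<forall>t\<ge>0. (xs k t)^2 + (ys k t)^2 \<le> r^2"
  proof (intro ballI allI impI)
    fix k T assume k: "k\<in>{1..N}" and T: "(0::real) \<le> T"
    have "\<forall>\<epsilon>>0. xs k T^2 + ys k T^2 < r^2 + \<epsilon>*(1+T)"
    proof (intro allI impI)
      fix \<epsilon>::real assume \<epsilon>: "\<epsilon>>0"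
      define g where "g = (\<lambda>i t. xs i t^2 + ys i t^2 - (r^2 + \<epsilon>*(1+t)))"
      have deriv: "(g i has_real_derivative (2*xs i t * net_x ca N xs ys i t
              + 2*ys i t * net_y \<alpha> \<beta> \<gamma> \<omega> ca N xs ys i t - \<epsilon>)) (at t within {0..})"
        if "i\<in>{1..N}" "t\<ge>0" for i t
        unfolding g_def using that
        by (auto intro!: derivative_eq_intros solx soly)
      have "\<forall>i\<in>{1..N}. \<forall>t\<in>{0..T}. g i t < 0"
      proof (rule first_cross)
        show "\<forall>i\<in>{1..N}. continuous_on {0..T} (g i)"
          by (auto intro!: DERIV_continuous_on has_field_derivative_subset[OF deriv])
        show "\<forall>i\<in>{1..N}. g i 0 < 0" using init \<epsilon> by (fastforce simp: g_def)
        fix t i assume t: "t\<in>{0<..T}" and i: "i \<in> {1..N}" and g0: "g i t = 0"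
          and below: "\<forall>j\<in>{1..N}. \<forall>s\<in>{0..<t}. g j s < 0" and le: "\<forall>j\<in>{1..N}. g j t \<le> 0"
        have bnd: "\<forall>j\<in>{1..N}. (xs j t)^2 + (ys j t)^2 \<le> (xs i t)^2 + (ys i t)^2"
          using le g0 by (auto simp: g_def)
        have "xs i t * net_x ca N xs ys i t + ys i t * net_y \<alpha> \<beta> \<gamma> \<omega> ca N xs ys i t \<le> 0"
          unfolding net_x_def net_y_def
          by (rule key[OF assms(1-5) _ bnd]) simp
        hence D: "2*xs i t * net_x ca N xs ys i t + 2*ys i t * net_y \<alpha> \<beta> \<gamma> \<omega> ca N xs ys i t - \<epsilon> < 0"
          using \<epsilon> by linarith
        have "(g i has_real_derivative (2*xs i t * net_x ca N xs ys i t + 2*ys i t * net_y \<alpha> \<beta> \<gamma> \<omega> ca N xs ys i t - \<epsilon>)) (at t within {0..t})"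
          by (rule has_field_derivative_subset[OF deriv]) (use i t in auto)
        from deriv_neg_left[OF this _ D] t obtain s where "s\<in>{0..<t}" "g i s > g i t" by auto
        thus False using below i g0 by force
      qed (use T in auto)
      then show "xs k T^2 + ys k T^2 < r^2 + \<epsilon>*(1+T)" using k T by (auto simp: g_def)
    qed
    then show "(xs k T)^2 + (ys k T)^2 \<le> r^2" by (rule eps_le[OF T])
  qed
  have P1: "\<forall>t\<ge>0. \<forall>x y. x^2 + y^2 = r^2 \<longrightarrow>
            x * virt_x ca N xs t x y + y * virt_y \<alpha> \<beta> \<gamma> \<omega> ca N ys t x y \<le> 0"
  proof (intro allI impI)
    fix t x y :: real assume t: "t \<ge> 0" and xy: "x^2 + y^2 = r^2"
    have bnd: "\<forall>j\<in>{1..N}. (xs j t)^2 + (ys j t)^2 \<le> x^2 + y^2" using Eb t xy by auto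
    show "x * virt_x ca N xs t x y + y * virt_y \<alpha> \<beta> \<gamma> \<omega> ca N ys t x y \<le> 0"
      unfolding virt_x_def virt_y_def sumx
      by (rule key[OF assms(1-5) _ bnd]) simp
  qed
  have P2: "\<forall>t0 t1 (u::real \<Rightarrow> real) (v::real \<Rightarrow> real). 0 \<le> t0 \<and> t0 \<le> t1
            \<and> (\<forall>t\<in>{t0..t1}. (u has_real_derivative virt_x ca N xs t (u t) (v t)) (at t within {t0..t1})
                           \<and> (v has_real_derivative virt_y \<alpha> \<beta> \<gamma> \<omega> ca N ys t (u t) (v t)) (at t within {t0..t1}))
            \<and> (u t0)^2 + (v t0)^2 \<le> r^2
            \<longrightarrow> (\<forall>t\<in>{t0..t1}. (u t)^2 + (v t)^2 \<le> r^2)"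
  proof (intro allI impI ballI)
    fix t0 t1 :: real and u v :: "real \<Rightarrow> real" and T
    assume H: "0 \<le> t0 \<and> t0 \<le> t1
            \<and> (\<forall>t\<in>{t0..t1}. (u has_real_derivative virt_x ca N xs t (u t) (v t)) (at t within {t0..t1})
                           \<and> (v has_real_derivative virt_y \<alpha> \<beta> \<gamma> \<omega> ca N ys t (u t) (v t)) (at t within {t0..t1}))
            \<and> (u t0)^2 + (v t0)^2 \<le> r^2" and T: "T \<in> {t0..t1}"
    have T0: "T \<ge> 0" using H T by auto
    have "\<forall>\<epsilon>>0. u T^2 + v T^2 < r^2 + \<epsilon>*(1+T)"
    proof (intro allI impI)
      fix \<epsilon>::real assume \<epsilon>: "\<epsilon>>0"
      define g where "g = (\<lambda>(i::nat) t. u t^2 + v t^2 - (r^2 + \<epsilon>*(1+t)))"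
      have deriv: "(g i has_real_derivative (2*u t * virt_x ca N xs t (u t) (v t)
              + 2 * v t * virt_y \<alpha> \<beta> \<gamma> \<omega> ca N ys t (u t) (v t) - \<epsilon>)) (at t within {t0..t1})"
        if "t\<in>{t0..t1}" for i t
        unfolding g_def using that H
        by (auto intro!: derivative_eq_intros)
      have "\<forall>i\<in>{0::nat}. \<forall>t\<in>{t0..t1}. g i t < 0"
      proof (rule first_cross)
        show "\<forall>i\<in>{0::nat}. continuous_on {t0..t1} (g i)"
          by (auto intro!: DERIV_continuous_on deriv)
        show "\<forall>i\<in>{0::nat}. g i t0 < 0"
        proof -
          have "t0 \<ge> 0" using H by blast
          hence "\<epsilon>*(1+t0) > 0" using \<epsilon> by simp
          moreover have "(u t0)^2 + (v t0)^2 \<le> r^2" using H by blast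
          ultimately show ?thesis unfolding g_def by (intro ballI) linarith
        qed
        fix t i assume t: "t\<in>{t0<..t1}" and i: "i \<in> {0::nat}" and g0: "g i t = 0"
          and below: "\<forall>j\<in>{0::nat}. \<forall>s\<in>{t0..<t}. g j s < 0"
        have "u t^2 + v t^2 = r^2 + \<epsilon>*(1+t)" using g0 by (simp add: g_def)
        moreover have "\<epsilon>*(1+t) \<ge> 0" using \<epsilon> t H by auto
        ultimately have "u t^2 + v t^2 \<ge> r^2" by linarith
        have t0': "t \<ge> 0" using t H by auto
        have bnd: "\<forall>j\<in>{1..N}. (xs j t)^2 + (ys j t)^2 \<le> (u t)^2 + (v t)^2"
        proof
          fix j assume "j \<in> {1..N}"
          hence "(xs j t)^2 + (ys j t)^2 \<le> r^2" using Eb t0' by blast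
          thus "(xs j t)^2 + (ys j t)^2 \<le> (u t)^2 + (v t)^2" using \<open>u t^2 + v t^2 \<ge> r^2\<close> by linarith
        qed
        have "u t * virt_x ca N xs t (u t) (v t) + v t * virt_y \<alpha> \<beta> \<gamma> \<omega> ca N ys t (u t) (v t) \<le> 0"
          unfolding virt_x_def virt_y_def sumx
          by (rule key[OF assms(1-5) _ bnd]) simp
        hence D: "2*u t * virt_x ca N xs t (u t) (v t) + 2 * v t * virt_y \<alpha> \<beta> \<gamma> \<omega> ca N ys t (u t) (v t) - \<epsilon> < 0"
          using \<epsilon> by linarith
        have "(g i has_real_derivative (2*u t * virt_x ca N xs t (u t) (v t) + 2 * v t * virt_y \<alpha> \<beta> \<gamma> \<omega> ca N ys t (u t) (v t) - \<epsilon>)) (at t within {t0..t})"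
          by (rule has_field_derivative_subset[OF deriv]) (use t in auto)
        from deriv_neg_left[OF this _ D] t obtain s where "s\<in>{t0..<t}" "g i s > g i t" by auto
        thus False using below i g0 by force
      qed (use H in auto)
      then show "u T^2 + v T^2 < r^2 + \<epsilon>*(1+T)" using T by (auto simp: g_def)
    qed
    then show "(u T)^2 + (v T)^2 \<le> r^2" by (rule eps_le[OF T0])
  qed
  show ?thesis using P1 P2 Eb by blast
qed

end
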